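(* Let $(\Omega,\mathcal{F})$, $Q$, $\mathcal{C}_1,\dots,\mathcal{C}_t$ and the sequences $S_{n,i},P_{n,i}$ be as in the context, and assume $\sup_{n,i}\int dS_{n,i}<\infty$ (Assumption A). Then $\sup_{n\ge1,\,1\le i\le t}I(P_{n,i}|S_{n,i})<\infty$.
   Context: $(\Omega,\mathcal{F})$ is a measurable space, $Q$ a probability measure, $\mathcal{C}_1,\dots,\mathcal{C}_t$ variation-closed convex sets of probability measures on $(\Omega,\mathcal{F})$, and there exists $V\in\bigcap_{i=1}^t\mathcal{C}_i$ with $I(V|Q)<\infty$. For a probability measure $P$ and finite measure $R$, $I(P|R)=\int\ln(dP/dR)\,dP$ if $P\ll R$, $+\infty$ otherwise (conventions $\ln0=-\infty$, $\ln(a/0)=+\infty$, $0\cdot(\pm\infty)=0$). For a finite measure $S$, $\pi_i(S)$ is the $R\in\mathcal{C}_i$ with $I(R|S)=\inf_{P\in\mathcal{C}_i}I(P|S)<\infty$. Algorithm: $S_{0,i}=P_{0,i}=Q$; for $n=1,2,\dots$ and $i=1,\dots,t$ in order, $\frac{dS_{n,1}}{dQ}=\frac{dP_{n-1,t}}{dQ}(\frac{dP_{n-1,1}}{dS_{n-1,1}})^{-1}$, $\frac{dS_{n,i}}{dQ}=\frac{dP_{n,i-1}}{dQ}(\frac{dP_{n-1,i}}{dS_{n-1,i}})^{-1}$ for $i\ge2$, and $P_{n,i}=\pi_i(S_{n,i})$. *)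

theory Defs
  imports "HOL-Probability.Probability"
begin

definition prob_on :: "'a measure \<Rightarrow> 'a measure \<Rightarrow> bool" where
  "prob_on Q P \<longleftrightarrow> prob_space P \<and> sets P = sets Q"

definition mix :: "real \<Rightarrow> 'a measure \<Rightarrow> 'a measure \<Rightarrow> 'a measure" where
  "mix l P R = measure_of (space P) (sets P)
     (\<lambda>A. ennreal l * emeasure P A + ennreal (1 - l) * emeasure R A)"

definition convex_meas_set :: "'a measure set \<Rightarrow> bool" where
  "convex_meas_set C \<longleftrightarrow>
     (\<forall>P\<in>C. \<forall>R\<in>C. \<forall>l\<in>{0..1}. mix l P R \<in> C)"

definition tv_dist :: "'a measure \<Rightarrow> 'a measure \<Rightarrow> real" where
  "tv_dist P R = (SUP A\<in>sets P. \<bar>measure P A - measure R A\<bar>)"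

definition variation_closed :: "'a measure \<Rightarrow> 'a measure set \<Rightarrow> bool" where
  "variation_closed Q C \<longleftrightarrow>
     (\<forall>X P. (\<forall>k. X k \<in> C) \<longrightarrow> prob_on Q P \<longrightarrow>
        (\<lambda>k. tv_dist (X k) P) \<longlonglongrightarrow> 0 \<longrightarrow> P \<in> C)"

definition lnE :: "ennreal \<Rightarrow> ereal" where
  "lnE x = (if x = 0 then - \<infinity> else if x = \<infinity> then \<infinity> else ereal (ln (enn2real x)))"

text \<open>I-divergence I(P|R) = \<integral> ln(dP/dR) dP if P \<ll> R, +\<infinity> otherwise
  (integral of an extended-real function as positive minus negative part).\<close>
definition I_div :: "'a measure \<Rightarrow> 'a measure \<Rightarrow> ereal" where
  "I_div P R = (if absolutely_continuous R P
     then enn2ereal (\<integral>\<^sup>+x. e2ennreal (max 0 (lnE (RN_deriv R P x))) \<partial>P)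
        - enn2ereal (\<integral>\<^sup>+x. e2ennreal (max 0 (- lnE (RN_deriv R P x))) \<partial>P)
     else \<infinity>)"

definition is_I_proj :: "'a measure set \<Rightarrow> 'a measure \<Rightarrow> 'a measure \<Rightarrow> bool" where
  "is_I_proj C S R \<longleftrightarrow> R \<in> C \<and> I_div R S = (INF P\<in>C. I_div P S) \<and> I_div R S < \<infinity>"

end

theory Submission
  imports Defs
begin


definition phi :: "real \<Rightarrow> real" where "phi x = x * ln x"

lemma phi_ge: "0 \<le> x \<Longrightarrow> phi x \<ge> x - 1"
proof (cases "x = 0")
  case False
  assume "0 \<le> x" then have x: "0 < x" using False by simp
  have "ln (1/x) \<le> 1/x - 1" using x by (intro ln_le_minus_one) simp
  then have "- ln x \<le> 1/x - 1" using x by (simp add: ln_div)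
  then have "x * (- ln x) \<le> x * (1/x - 1)" using x by (intro mult_left_mono) auto
  then show ?thesis using x by (simp add: phi_def algebra_simps)
qed (simp add: phi_def)

lemma phi_ge1: "0 \<le> x \<Longrightarrow> phi x \<ge> -1"
  using phi_ge[of x] by simp

lemma phi_tangent: assumes "0 \<le> x" "0 < y" shows "phi x \<ge> phi y + (x - y) * (1 + ln y)"
proof (cases "x = 0")
  case True then show ?thesis using assms by (simp add: phi_def algebra_simps)
next
  case False
  then have x: "0 < x" using assms by simp
  have "ln (y/x) \<le> y/x - 1" using x assms by (intro ln_le_minus_one) simp
  then have "ln y - ln x \<le> y/x - 1" using x assms by (simp add: ln_div)
  then have "x * (ln y - ln x) \<le> x * (y/x - 1)" using x by (intro mult_left_mono) auto
  then show ?thesis using x by (simp add: phi_def algebra_simps)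
qed

lemma phi_convex: assumes "0 \<le> a" "0 \<le> b" "0 \<le> l" "l \<le> 1"
  shows "phi (l * a + (1 - l) * b) \<le> l * phi a + (1 - l) * phi b"
proof (cases "l * a + (1 - l) * b = 0")
  case True
  then have "l * a = 0" "(1 - l) * b = 0" using assms by (smt (verit) mult_nonneg_nonneg)+
  then have "l * phi a = 0" "(1 - l) * phi b = 0" unfolding phi_def by (metis mult.assoc mult_zero_left)+
  moreover have "phi (l * a + (1 - l) * b) = 0" using True by (simp add: phi_def)
  ultimately show ?thesis by linarith
next
  case False
  define z where "z = l * a + (1 - l) * b"
  have z: "0 < z" using False assms unfolding z_def by (smt (verit) mult_nonneg_nonneg)
  have 1: "phi a \<ge> phi z + (a - z) * (1 + ln z)" using phi_tangent assms z by auto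
  have 2: "phi b \<ge> phi z + (b - z) * (1 + ln z)" using phi_tangent assms z by auto
  have "l * phi a + (1 - l) * phi b \<ge> l * (phi z + (a - z) * (1 + ln z)) + (1 - l) * (phi z + (b - z) * (1 + ln z))"
    using 1 2 assms by (intro add_mono mult_left_mono) auto
  also have "l * (phi z + (a - z) * (1 + ln z)) + (1 - l) * (phi z + (b - z) * (1 + ln z)) = phi z"
    unfolding z_def by (simp add: algebra_simps)
  finally show ?thesis unfolding z_def .
qed



lemma lnE_meas[measurable]: assumes [measurable]: "f \<in> borel_measurable M" shows "(\<lambda>x. lnE (f x)) \<in> borel_measurable M"
  unfolding lnE_def by measurable

lemma phi_meas[measurable]: assumes [measurable]: "f \<in> borel_measurable M" shows "(\<lambda>x. phi (f x)) \<in> borel_measurable M"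
  unfolding phi_def by measurable

lemma pos_part_pt: assumes "r \<noteq> \<infinity>"
  shows "r * e2ennreal (max 0 (lnE r)) = ennreal (phi (enn2real r))"
    and "r * e2ennreal (max 0 (- lnE r)) = ennreal (- phi (enn2real r))"
proof -
  have "r * e2ennreal (max 0 (lnE r)) = ennreal (phi (enn2real r)) \<and>
        r * e2ennreal (max 0 (- lnE r)) = ennreal (- phi (enn2real r))"
  proof (cases "r = 0")
    case True then show ?thesis by (simp add: phi_def)
  next
    case False
    obtain u where u: "r = ennreal u" "0 \<le> u" using assms by (cases r) (auto simp: top_ennreal_def)
    then have u0: "0 < u" using False by auto
    have l: "lnE (ennreal u) = ereal (ln u)" using u u0 False assms by (simp add: lnE_def)
    have 1: "max 0 (ereal (ln u)) = ereal (max 0 (ln u))" by (simp add: max_def)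
    have 2: "max 0 (- ereal (ln u)) = ereal (max 0 (- ln u))" by (simp add: max_def)
    have 3: "ennreal u * ennreal (max 0 (ln u)) = ennreal (phi u)"
      using u0 by (simp add: ennreal_mult'[symmetric] phi_def max_def mult_le_0_iff ennreal_neg)
    have 4: "ennreal u * ennreal (max 0 (- ln u)) = ennreal (- phi u)"
      using u0 by (simp add: ennreal_mult'[symmetric] phi_def max_def mult_le_0_iff ennreal_neg)
    show ?thesis unfolding u(1) l 1 2 e2ennreal_ereal using 3 4 u(2) by simp
  qed
  then show "r * e2ennreal (max 0 (lnE r)) = ennreal (phi (enn2real r))"
    and "r * e2ennreal (max 0 (- lnE r)) = ennreal (- phi (enn2real r))" by auto
qed



lemma Sform:
  assumes X: "finite_measure X" and Y: "prob_space Y" and sets: "sets Y = sets X"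
    and ac: "absolutely_continuous X Y"
  shows "I_div Y X = enn2ereal (\<integral>\<^sup>+x. ennreal (phi (enn2real (RN_deriv X Y x))) \<partial>X)
             - enn2ereal (\<integral>\<^sup>+x. ennreal (- phi (enn2real (RN_deriv X Y x))) \<partial>X)"
    and "(\<integral>\<^sup>+x. ennreal (- phi (enn2real (RN_deriv X Y x))) \<partial>X) \<le> emeasure X (space X)"
proof -
  interpret X: finite_measure X by fact
  interpret Y: prob_space Y by fact
  have Yd: "density X (RN_deriv X Y) = Y" using X.density_RN_deriv[OF ac sets] .
  have fin: "AE x in X. RN_deriv X Y x \<noteq> \<infinity>"
    using X.RN_deriv_finite[OF Y.sigma_finite_measure_axioms ac sets] .
  have "(\<integral>\<^sup>+x. e2ennreal (max 0 (lnE (RN_deriv X Y x))) \<partial>Y)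
      = (\<integral>\<^sup>+x. e2ennreal (max 0 (lnE (RN_deriv X Y x))) \<partial>density X (RN_deriv X Y))"
    using Yd by simp
  also have "\<dots> = (\<integral>\<^sup>+x. RN_deriv X Y x * e2ennreal (max 0 (lnE (RN_deriv X Y x))) \<partial>X)"
    by (rule nn_integral_density) measurable
  also have "\<dots> = (\<integral>\<^sup>+x. ennreal (phi (enn2real (RN_deriv X Y x))) \<partial>X)"
    using fin by (intro nn_integral_cong_AE) (auto elim!: eventually_mono simp: pos_part_pt)
  finally have P: "(\<integral>\<^sup>+x. e2ennreal (max 0 (lnE (RN_deriv X Y x))) \<partial>Y)
      = (\<integral>\<^sup>+x. ennreal (phi (enn2real (RN_deriv X Y x))) \<partial>X)" .
  have "(\<integral>\<^sup>+x. e2ennreal (max 0 (- lnE (RN_deriv X Y x))) \<partial>Y)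
      = (\<integral>\<^sup>+x. e2ennreal (max 0 (- lnE (RN_deriv X Y x))) \<partial>density X (RN_deriv X Y))"
    using Yd by simp
  also have "\<dots> = (\<integral>\<^sup>+x. RN_deriv X Y x * e2ennreal (max 0 (- lnE (RN_deriv X Y x))) \<partial>X)"
    by (rule nn_integral_density) measurable
  also have "\<dots> = (\<integral>\<^sup>+x. ennreal (- phi (enn2real (RN_deriv X Y x))) \<partial>X)"
    using fin by (intro nn_integral_cong_AE) (auto elim!: eventually_mono simp: pos_part_pt)
  finally have N: "(\<integral>\<^sup>+x. e2ennreal (max 0 (- lnE (RN_deriv X Y x))) \<partial>Y)
      = (\<integral>\<^sup>+x. ennreal (- phi (enn2real (RN_deriv X Y x))) \<partial>X)" .
  show "I_div Y X = enn2ereal (\<integral>\<^sup>+x. ennreal (phi (enn2real (RN_deriv X Y x))) \<partial>X)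
             - enn2ereal (\<integral>\<^sup>+x. ennreal (- phi (enn2real (RN_deriv X Y x))) \<partial>X)"
    unfolding I_div_def using ac P N by simp
  have "(\<integral>\<^sup>+x. ennreal (- phi (enn2real (RN_deriv X Y x))) \<partial>X) \<le> (\<integral>\<^sup>+x. 1 \<partial>X)"
    using phi_ge1 by (intro nn_integral_mono) (simp add: ennreal_le_1 enn2real_nonneg)
  then show "(\<integral>\<^sup>+x. ennreal (- phi (enn2real (RN_deriv X Y x))) \<partial>X) \<le> emeasure X (space X)"
    by simp
qed



lemma enn2ereal_fin: "x \<noteq> top \<Longrightarrow> enn2ereal x = ereal (enn2real x)"
  unfolding enn2real_def using enn2ereal_nonneg[of x] by (cases "enn2ereal x") auto

lemma Sform_int:
  assumes X: "finite_measure X" and Y: "prob_space Y" and sets: "sets Y = sets X"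
    and ac: "absolutely_continuous X Y"
  shows "I_div Y X < \<infinity> \<longleftrightarrow> integrable X (\<lambda>x. phi (enn2real (RN_deriv X Y x)))"
    and "integrable X (\<lambda>x. phi (enn2real (RN_deriv X Y x))) \<Longrightarrow>
           I_div Y X = ereal (\<integral>x. phi (enn2real (RN_deriv X Y x)) \<partial>X)"
    and "I_div Y X \<ge> ereal (- measure X (space X))"
proof -
  interpret X: finite_measure X by fact
  define u where "u x = phi (enn2real (RN_deriv X Y x))" for x
  have um[measurable]: "u \<in> borel_measurable X" unfolding u_def by measurable
  define A where "A = (\<integral>\<^sup>+x. ennreal (u x) \<partial>X)"
  define B where "B = (\<integral>\<^sup>+x. ennreal (- u x) \<partial>X)"
  have I: "I_div Y X = enn2ereal A - enn2ereal B"
    unfolding A_def B_def u_def by (rule Sform[OF assms])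
  have "B \<le> emeasure X (space X)" unfolding B_def u_def by (rule Sform[OF assms])
  then have Bfin: "B \<noteq> top" by (intro neq_top_trans[OF X.emeasure_finite])
  have "(\<integral>\<^sup>+x. ennreal (norm (u x)) \<partial>X) = (\<integral>\<^sup>+x. ennreal (u x) + ennreal (- u x) \<partial>X)"
    apply (intro nn_integral_cong)
    subgoal for x by (cases "u x \<ge> 0") (auto simp: ennreal_neg)
    done
  also have "\<dots> = A + B" unfolding A_def B_def by (rule nn_integral_add) auto
  finally have nrm: "(\<integral>\<^sup>+x. ennreal (norm (u x)) \<partial>X) = A + B" .
  have intiff: "integrable X u \<longleftrightarrow> A \<noteq> top"
    unfolding integrable_iff_bounded nrm using Bfin um by (auto simp: less_top)
  have Iiff: "I_div Y X < \<infinity> \<longleftrightarrow> A \<noteq> top"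
  proof
    assume "A \<noteq> top" then show "I_div Y X < \<infinity>" using Bfin I by (simp add: enn2ereal_fin)
  next
    assume "I_div Y X < \<infinity>" then show "A \<noteq> top" using Bfin I by (auto simp: enn2ereal_fin)
  qed
  show "I_div Y X < \<infinity> \<longleftrightarrow> integrable X (\<lambda>x. phi (enn2real (RN_deriv X Y x)))"
    using Iiff intiff unfolding u_def by simp
  show "integrable X (\<lambda>x. phi (enn2real (RN_deriv X Y x))) \<Longrightarrow>
           I_div Y X = ereal (\<integral>x. phi (enn2real (RN_deriv X Y x)) \<partial>X)"
  proof -
    assume int: "integrable X (\<lambda>x. phi (enn2real (RN_deriv X Y x)))"
    then have int': "integrable X u" unfolding u_def .
    then have "A \<noteq> top" using intiff by simp
    have "integral\<^sup>L X u = enn2real A - enn2real B"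
      unfolding A_def B_def by (rule real_lebesgue_integral_def[OF int'])
    then show ?thesis using I \<open>A \<noteq> top\<close> Bfin unfolding u_def by (simp add: enn2ereal_fin)
  qed
  have "enn2ereal B \<le> enn2ereal (emeasure X (space X))" using \<open>B \<le> _\<close> by (simp add: less_eq_ennreal.rep_eq)
  also have "\<dots> = ereal (measure X (space X))" by (simp add: X.emeasure_eq_measure)
  finally have EB: "enn2ereal B \<le> ereal (measure X (space X))" .
  then have "0 - enn2ereal B \<le> enn2ereal A - enn2ereal B"
    using Bfin by (intro ereal_minus_mono) auto
  moreover have "ereal (- measure X (space X)) \<le> 0 - enn2ereal B"
    using EB Bfin by (simp add: enn2ereal_fin)
  ultimately show "I_div Y X \<ge> ereal (- measure X (space X))" using I by simp
qed



lemma Vform: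
  assumes X: "finite_measure X" and V: "prob_space V" and sets: "sets V = sets X"
    and ac: "absolutely_continuous X V"
    and int: "integrable X (\<lambda>x. phi (enn2real (RN_deriv X V x)))"
  shows "integrable V (\<lambda>x. ln (enn2real (RN_deriv X V x)))"
    and "(\<integral>x. ln (enn2real (RN_deriv X V x)) \<partial>V) = (\<integral>x. phi (enn2real (RN_deriv X V x)) \<partial>X)"
proof -
  interpret X: finite_measure X by fact
  interpret V: prob_space V by fact
  have m: "(\<lambda>x. ln (enn2real (RN_deriv X V x))) \<in> borel_measurable X" by measurable
  show "integrable V (\<lambda>x. ln (enn2real (RN_deriv X V x)))"
    using int unfolding X.RN_deriv_integrable[OF V.sigma_finite_measure_axioms ac sets m] phi_def .
  show "(\<integral>x. ln (enn2real (RN_deriv X V x)) \<partial>V) = (\<integral>x. phi (enn2real (RN_deriv X V x)) \<partial>X)"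
    unfolding X.RN_deriv_integral[OF V.sigma_finite_measure_axioms ac sets m] phi_def ..
qed

lemma Vform':
  assumes X: "finite_measure X" and V: "prob_space V" and sets: "sets V = sets X"
    and ac: "absolutely_continuous X V"
    and int: "integrable V (\<lambda>x. ln (enn2real (RN_deriv X V x)))"
  shows "integrable X (\<lambda>x. phi (enn2real (RN_deriv X V x)))"
proof -
  interpret X: finite_measure X by fact
  interpret V: prob_space V by fact
  have m: "(\<lambda>x. ln (enn2real (RN_deriv X V x))) \<in> borel_measurable X" by measurable
  show ?thesis
    using int unfolding X.RN_deriv_integrable[OF V.sigma_finite_measure_axioms ac sets m] phi_def .
qed

lemma RN_AE_pos:
  assumes M: "sigma_finite_measure M" and N: "sigma_finite_measure N"
    and ac: "absolutely_continuous M N" and sets: "sets N = sets M"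
  shows "AE x in N. RN_deriv M N x \<noteq> 0 \<and> RN_deriv M N x \<noteq> \<infinity>"
proof -
  interpret M: sigma_finite_measure M by fact
  have d: "density M (RN_deriv M N) = N" by (rule M.density_RN_deriv[OF ac sets])
  have "AE x in density M (RN_deriv M N). RN_deriv M N x \<noteq> 0"
    by (subst AE_density) auto
  then have 1: "AE x in N. RN_deriv M N x \<noteq> 0" unfolding d .
  have 2: "AE x in N. RN_deriv M N x \<noteq> \<infinity>"
    by (rule absolutely_continuous_AE[OF sets ac M.RN_deriv_finite[OF N ac sets]])
  show ?thesis using 1 2 by eventually_elim auto
qed

lemma RN_ratio:
  assumes M: "sigma_finite_measure M" and X: "finite_measure X" and V: "finite_measure V"
    and sX: "sets X = sets M" and sV: "sets V = sets M"
    and acX: "absolutely_continuous M X" and acV: "absolutely_continuous M V"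
    and acVX: "absolutely_continuous X V"
  shows "AE x in V. 0 < enn2real (RN_deriv M X x) \<and> 0 < enn2real (RN_deriv M V x) \<and>
     ln (enn2real (RN_deriv X V x)) = ln (enn2real (RN_deriv M V x)) - ln (enn2real (RN_deriv M X x))"
proof -
  interpret M: sigma_finite_measure M by fact
  interpret X: finite_measure X by fact
  interpret V: finite_measure V by fact
  have sVX: "sets V = sets X" using sX sV by simp
  have mX: "RN_deriv X V \<in> borel_measurable M"
    by (subst measurable_cong_sets[OF sX[symmetric] refl]) simp
  have "density M (\<lambda>x. RN_deriv M X x * RN_deriv X V x) = density (density M (RN_deriv M X)) (RN_deriv X V)"
    using mX by (simp add: density_density_eq)
  also have "\<dots> = density X (RN_deriv X V)" using M.density_RN_deriv[OF acX sX] by simp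
  also have "\<dots> = V" by (rule X.density_RN_deriv[OF acVX sVX])
  finally have "AE x in M. RN_deriv M X x * RN_deriv X V x = RN_deriv M V x"
    using mX by (intro M.RN_deriv_unique) auto
  then have e: "AE x in V. RN_deriv M X x * RN_deriv X V x = RN_deriv M V x"
    by (rule absolutely_continuous_AE[OF sV acV])
  have p1: "AE x in V. RN_deriv M V x \<noteq> 0 \<and> RN_deriv M V x \<noteq> \<infinity>"
    by (rule RN_AE_pos[OF M V.sigma_finite_measure_axioms acV sV])
  have p2: "AE x in V. RN_deriv X V x \<noteq> 0 \<and> RN_deriv X V x \<noteq> \<infinity>"
    by (rule RN_AE_pos[OF X.sigma_finite_measure_axioms V.sigma_finite_measure_axioms acVX sVX])
  show ?thesis using e p1 p2
  proof eventually_elim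
    case (elim x)
    define a where "a = RN_deriv M X x"
    define b where "b = RN_deriv X V x"
    define c where "c = RN_deriv M V x"
    have e: "a * b = c" and c: "c \<noteq> 0" "c \<noteq> \<infinity>" and b: "b \<noteq> 0" "b \<noteq> \<infinity>"
      using elim unfolding a_def b_def c_def by auto
    have a0: "a \<noteq> 0" using e c by auto
    have ainf: "a \<noteq> \<infinity>" using e c b by (auto simp: ennreal_mult_eq_top_iff)
    have ra: "0 < enn2real a" using a0 ainf by (simp add: enn2real_positive_iff less_top[symmetric] zero_less_iff_neq_zero)
    have rb: "0 < enn2real b" using b by (simp add: enn2real_positive_iff less_top[symmetric] zero_less_iff_neq_zero)
    have rc: "0 < enn2real c" using c by (simp add: enn2real_positive_iff less_top[symmetric] zero_less_iff_neq_zero)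
    have "enn2real c = enn2real a * enn2real b" using e enn2real_mult[of a b] by simp
    then have "ln (enn2real c) = ln (enn2real a) + ln (enn2real b)" using ra rb by (simp add: ln_mult)
    then show ?case using ra rc unfolding a_def b_def c_def by simp
  qed
qed



lemma mix_density:
  assumes S: "sigma_finite_measure S" and sP: "sets P = sets S" and sR: "sets R = sets S"
    and aP: "absolutely_continuous S P" and aR: "absolutely_continuous S R"
  shows "mix l P R = density S (\<lambda>x. ennreal l * RN_deriv S P x + ennreal (1 - l) * RN_deriv S R x)"
proof -
  interpret S: sigma_finite_measure S by fact
  let ?w = "\<lambda>x. ennreal l * RN_deriv S P x + ennreal (1 - l) * RN_deriv S R x"
  have spP: "space P = space S" using sP by (rule sets_eq_imp_space_eq)
  have dP: "density S (RN_deriv S P) = P" by (rule S.density_RN_deriv[OF aP sP])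
  have dR: "density S (RN_deriv S R) = R" by (rule S.density_RN_deriv[OF aR sR])
  have "density S ?w = measure_of (space (density S ?w)) (sets (density S ?w)) (emeasure (density S ?w))"
    by (rule measure_of_of_measure[symmetric])
  also have "\<dots> = measure_of (space S) (sets S) (emeasure (density S ?w))" by simp
  also have "\<dots> = measure_of (space S) (sets S) (\<lambda>A. ennreal l * emeasure P A + ennreal (1 - l) * emeasure R A)"
  proof (rule measure_of_eq)
    show "sets S \<subseteq> Pow (space S)" using sets.sets_into_space by auto
    fix A assume "A \<in> sigma_sets (space S) (sets S)"
    then have A[measurable]: "A \<in> sets S" by (simp add: sets.sigma_sets_eq)
    have "emeasure (density S ?w) A = (\<integral>\<^sup>+x. ?w x * indicator A x \<partial>S)"
      by (rule emeasure_density) auto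
    also have "\<dots> = (\<integral>\<^sup>+x. ennreal l * (RN_deriv S P x * indicator A x) + ennreal (1 - l) * (RN_deriv S R x * indicator A x) \<partial>S)"
      by (intro nn_integral_cong) (simp add: distrib_right mult.assoc)
    also have "\<dots> = ennreal l * (\<integral>\<^sup>+x. RN_deriv S P x * indicator A x \<partial>S) + ennreal (1 - l) * (\<integral>\<^sup>+x. RN_deriv S R x * indicator A x \<partial>S)"
      by (simp add: nn_integral_add nn_integral_cmult)
    also have "\<dots> = ennreal l * emeasure (density S (RN_deriv S P)) A + ennreal (1 - l) * emeasure (density S (RN_deriv S R)) A"
      by (simp add: emeasure_density)
    also have "\<dots> = ennreal l * emeasure P A + ennreal (1 - l) * emeasure R A" unfolding dP dR ..
    finally show "emeasure (density S ?w) A = ennreal l * emeasure P A + ennreal (1 - l) * emeasure R A" .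
  qed
  also have "\<dots> = mix l P R" unfolding mix_def spP sP ..
  finally show ?thesis ..
qed



definition alpha :: "nat \<Rightarrow> real" where "alpha k = 1 / real (k + 2)"

lemma alpha_pos: "0 < alpha k" and alpha_lt1: "alpha k < 1"
  by (auto simp: alpha_def)

lemma alpha_lim: "alpha \<longlonglongrightarrow> 0"
  unfolding alpha_def using LIMSEQ_ignore_initial_segment[OF lim_inverse_n', of 2] by simp

lemma pt_E_nonneg:
  assumes "0 \<le> f" "0 \<le> g" "0 < a" "a \<le> 1"
  shows "(phi ((1 - a) * f + a * g) - phi f) / a \<le> phi g - phi f"
proof -
  have "phi ((1 - a) * f + (1 - (1 - a)) * g) \<le> (1 - a) * phi f + (1 - (1 - a)) * phi g"
    using assms by (intro phi_convex) auto
  then have "phi ((1 - a) * f + a * g) - phi f \<le> a * (phi g - phi f)" by (simp add: algebra_simps)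
  then show ?thesis using assms by (simp add: divide_le_eq mult.commute)
qed

lemma pt_G:
  assumes "0 \<le> f" "0 \<le> g" "0 < a" "a < 1"
  shows "(phi ((1 - a) * f + a * g) - phi f) / a \<le> (g - f) * (1 + ln ((1 - a) * f + a * g))"
proof (cases "(1 - a) * f + a * g = 0")
  case True
  then have "f = 0" "g = 0" using assms by (smt (verit) mult_nonneg_nonneg mult_pos_pos)+
  then show ?thesis by (simp add: phi_def)
next
  case False
  define y where "y = (1 - a) * f + a * g"
  have y: "0 < y" using False assms unfolding y_def by (smt (verit) mult_nonneg_nonneg)
  have "phi f \<ge> phi y + (f - y) * (1 + ln y)" using phi_tangent assms y by auto
  then have "phi y - phi f \<le> (y - f) * (1 + ln y)" by (simp add: algebra_simps)
  also have "y - f = a * (g - f)" unfolding y_def by (simp add: algebra_simps)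
  finally have "phi y - phi f \<le> a * ((g - f) * (1 + ln y))" by (simp add: mult.assoc)
  then show ?thesis using assms unfolding y_def[symmetric] by (simp add: divide_le_eq mult.commute)
qed

lemma pt_lim_pos:
  assumes "0 < f"
  shows "(\<lambda>k. (g - f) * (1 + ln ((1 - alpha k) * f + alpha k * g))) \<longlonglongrightarrow> (g - f) * (1 + ln f)"
proof -
  have "(\<lambda>k. (1 - alpha k) * f + alpha k * g) \<longlonglongrightarrow> (1 - 0) * f + 0 * g"
    by (intro tendsto_intros alpha_lim)
  then have "(\<lambda>k. ln ((1 - alpha k) * f + alpha k * g)) \<longlonglongrightarrow> ln f"
    using assms by (intro tendsto_ln) auto
  then show ?thesis by (intro tendsto_mult tendsto_add tendsto_const)
qed

lemma pt_lim_bad: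
  assumes "0 < g"
  shows "filterlim (\<lambda>k. (phi g - phi 0) - (g - 0) * (1 + ln ((1 - alpha k) * 0 + alpha k * g))) at_top sequentially"
proof -
  have eq: "(phi g - phi 0) - (g - 0) * (1 + ln ((1 - alpha k) * 0 + alpha k * g)) = - g + g * ln (real k + 2)" for k
    using assms by (simp add: phi_def alpha_def ln_mult ln_div algebra_simps)
  have "filterlim (\<lambda>k. real k + 2) at_top sequentially"
    by (subst add.commute) (intro filterlim_tendsto_add_at_top[OF tendsto_const] filterlim_real_sequentially)
  then have "filterlim (\<lambda>k. ln (real k + 2)) at_top sequentially"
    by (rule filterlim_compose[OF ln_at_top])
  then have "filterlim (\<lambda>k. g * ln (real k + 2)) at_top sequentially"
    using assms by (intro filterlim_tendsto_pos_mult_at_top[OF tendsto_const]) auto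
  then have "filterlim (\<lambda>k. - g + g * ln (real k + 2)) at_top sequentially"
    by (intro filterlim_tendsto_add_at_top[OF tendsto_const])
  then show ?thesis unfolding eq .
qed



lemma cabs: "0 \<le> c \<Longrightarrow> c \<le> 1 \<Longrightarrow> c * (p::real) \<le> \<bar>p\<bar>"
proof -
  assume c: "0 \<le> c" "c \<le> 1"
  have "c * p \<le> c * \<bar>p\<bar>" using c by (intro mult_left_mono) auto
  also have "\<dots> \<le> \<bar>p\<bar>" using c by (intro mult_left_le_one_le) auto
  finally show ?thesis .
qed

lemma pyth_core:
  fixes f g :: "'a \<Rightarrow> real"
  assumes S: "finite_measure S"
    and fm[measurable]: "f \<in> borel_measurable S" and gm[measurable]: "g \<in> borel_measurable S"
    and f0: "\<And>x. 0 \<le> f x" and g0: "\<And>x. 0 \<le> g x"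
    and fi: "integrable S f" and gi: "integrable S g" and fg: "(\<integral>x. f x \<partial>S) = (\<integral>x. g x \<partial>S)"
    and pfi: "integrable S (\<lambda>x. phi (f x))" and pgi: "integrable S (\<lambda>x. phi (g x))"
    and minim: "\<And>a. 0 < a \<Longrightarrow> a < 1 \<Longrightarrow>
        (\<integral>x. phi (f x) \<partial>S) \<le> (\<integral>x. phi ((1 - a) * f x + a * g x) \<partial>S)"
  shows "AE x in S. f x = 0 \<longrightarrow> g x = 0"
    and "integrable S (\<lambda>x. g x * ln (f x))"
    and "(\<integral>x. phi (f x) \<partial>S) \<le> (\<integral>x. g x * ln (f x) \<partial>S)"
proof -
  interpret finite_measure S by fact
  define fa where "fa a x = (1 - a) * f x + a * g x" for a x
  have fam[measurable]: "fa a \<in> borel_measurable S" for a unfolding fa_def by measurable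
  have fa0: "0 \<le> a \<Longrightarrow> a \<le> 1 \<Longrightarrow> 0 \<le> fa a x" for a x
    unfolding fa_def using f0 g0 by (intro add_nonneg_nonneg mult_nonneg_nonneg) auto
  have pfai: "integrable S (\<lambda>x. phi (fa a x))" if a: "0 < a" "a < 1" for a
  proof -
    have maj: "integrable S (\<lambda>x. 1 + \<bar>phi (f x)\<bar> + \<bar>phi (g x)\<bar>)"
      by (intro Bochner_Integration.integrable_add Bochner_Integration.integrable_abs integrable_const pfi pgi)
    have bnd: "AE x in S. norm (phi (fa a x)) \<le> norm (1 + \<bar>phi (f x)\<bar> + \<bar>phi (g x)\<bar>)"
    proof (intro AE_I2)
      fix x
      have lo: "-1 \<le> phi (fa a x)" using phi_ge1 fa0 a by auto
      have "phi ((1 - a) * f x + (1 - (1 - a)) * g x) \<le> (1 - a) * phi (f x) + (1 - (1 - a)) * phi (g x)"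
        using a f0 g0 by (intro phi_convex) auto
      then have "phi (fa a x) \<le> (1 - a) * phi (f x) + a * phi (g x)" unfolding fa_def by simp
      also have "\<dots> \<le> \<bar>phi (f x)\<bar> + \<bar>phi (g x)\<bar>" using a by (intro add_mono cabs) auto
      finally show "norm (phi (fa a x)) \<le> norm (1 + \<bar>phi (f x)\<bar> + \<bar>phi (g x)\<bar>)" using lo by simp
    qed
    show ?thesis by (rule Bochner_Integration.integrable_bound[OF maj _ bnd]) measurable
  qed
  define D1 where "D1 x = phi (g x) - phi (f x)" for x
  have D1i: "integrable S D1" unfolding D1_def using pfi pgi by auto
  have D1m[measurable]: "D1 \<in> borel_measurable S" unfolding D1_def by measurable
  define Dk where "Dk k x = (phi (fa (alpha k) x) - phi (f x)) / alpha k" for k x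
  have Dki: "integrable S (Dk k)" for k
    unfolding Dk_def using pfai[OF alpha_pos alpha_lt1] pfi by auto
  have Dkint: "0 \<le> (\<integral>x. Dk k x \<partial>S)" for k
  proof -
    have "(\<integral>x. Dk k x \<partial>S) = ((\<integral>x. phi (fa (alpha k) x) \<partial>S) - (\<integral>x. phi (f x) \<partial>S)) / alpha k"
      unfolding Dk_def using pfai[OF alpha_pos alpha_lt1] pfi by simp
    moreover have "(\<integral>x. phi (f x) \<partial>S) \<le> (\<integral>x. phi (fa (alpha k) x) \<partial>S)"
      unfolding fa_def by (rule minim[OF alpha_pos alpha_lt1])
    ultimately show ?thesis using alpha_pos[of k] by simp
  qed
  have DkD1: "Dk k x \<le> D1 x" for k x
    unfolding Dk_def D1_def fa_def using pt_E_nonneg[OF f0[of x] g0[of x] alpha_pos[of k]] alpha_lt1[of k] by simp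
  have D1int: "0 \<le> (\<integral>x. D1 x \<partial>S)"
    using Dkint[of 0] integral_mono[OF Dki[of 0] D1i DkD1[of 0]] by linarith
  define Ek where "Ek k x = D1 x - Dk k x" for k x
  have Ek0: "0 \<le> Ek k x" for k x unfolding Ek_def using DkD1 by simp
  have Eki: "integrable S (Ek k)" for k unfolding Ek_def using D1i Dki by auto
  have Ekm[measurable]: "Ek k \<in> borel_measurable S" for k using Eki by auto
  have Ekbd: "(\<integral>\<^sup>+x. ennreal (Ek k x) \<partial>S) \<le> ennreal (\<integral>x. D1 x \<partial>S)" for k
  proof -
    have "(\<integral>\<^sup>+x. ennreal (Ek k x) \<partial>S) = ennreal (\<integral>x. Ek k x \<partial>S)"
      using Eki Ek0 by (intro nn_integral_eq_integral) auto
    also have "(\<integral>x. Ek k x \<partial>S) = (\<integral>x. D1 x \<partial>S) - (\<integral>x. Dk k x \<partial>S)"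
      unfolding Ek_def using D1i Dki by simp
    finally show ?thesis using Dkint[of k] by (simp add: ennreal_leI)
  qed
  have fatou: "(\<integral>\<^sup>+x. liminf (\<lambda>k. ennreal (Ek k x)) \<partial>S) \<le> ennreal (\<integral>x. D1 x \<partial>S)"
  proof -
    have "(\<integral>\<^sup>+x. liminf (\<lambda>k. ennreal (Ek k x)) \<partial>S) \<le> liminf (\<lambda>k. \<integral>\<^sup>+x. ennreal (Ek k x) \<partial>S)"
      by (rule nn_integral_liminf) measurable
    also have "\<dots> \<le> ennreal (\<integral>x. D1 x \<partial>S)"
      using Ekbd by (intro Liminf_le) auto
    finally show ?thesis .
  qed
  define T where "T x = (g x - f x) * (1 + ln (f x))" for x
  define Gf where "Gf x = D1 x - T x" for x
  have Tm[measurable]: "T \<in> borel_measurable S" unfolding T_def by measurable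
  have Gm[measurable]: "Gf \<in> borel_measurable S" unfolding Gf_def by measurable
  define H where "H x = (if f x = 0 \<and> 0 < g x then top else ennreal (Gf x))" for x
  have Hm[measurable]: "H \<in> borel_measurable S" unfolding H_def by measurable
  have HE: "H x \<le> liminf (\<lambda>k. ennreal (Ek k x))" for x
  proof -
    define Gk where "Gk k = D1 x - (g x - f x) * (1 + ln (fa (alpha k) x))" for k
    have GkE: "Gk k \<le> Ek k x" for k
      unfolding Gk_def Ek_def Dk_def fa_def using pt_G[OF f0[of x] g0[of x] alpha_pos[of k] alpha_lt1[of k]] by simp
    have mono: "liminf (\<lambda>k. ennreal (Gk k)) \<le> liminf (\<lambda>k. ennreal (Ek k x))"
      using GkE by (intro Liminf_mono always_eventually allI ennreal_leI)
    consider "0 < f x" | "f x = 0" "0 < g x" | "f x = 0" "g x = 0"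
      using f0[of x] g0[of x] by fastforce
    then show ?thesis
    proof cases
      case 1
      have "(\<lambda>k. Gk k) \<longlonglongrightarrow> D1 x - (g x - f x) * (1 + ln (f x))"
        unfolding Gk_def fa_def by (intro tendsto_diff tendsto_const pt_lim_pos 1)
      then have "(\<lambda>k. ennreal (Gk k)) \<longlonglongrightarrow> ennreal (Gf x)" unfolding Gf_def T_def
        by (rule tendsto_ennrealI)
      then have "liminf (\<lambda>k. ennreal (Gk k)) = ennreal (Gf x)" by (intro lim_imp_Liminf) auto
      then show ?thesis using mono 1 unfolding H_def by simp
    next
      case 2
      have "filterlim Gk at_top sequentially"
        using pt_lim_bad[OF 2(2)] unfolding Gk_def fa_def D1_def 2(1) .
      then have "(\<lambda>k. ennreal (Gk k)) \<longlonglongrightarrow> top"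
        by (simp add: ennreal_tendsto_top_eq_at_top)
      then have "liminf (\<lambda>k. ennreal (Gk k)) = top" by (intro lim_imp_Liminf) auto
      then show ?thesis using mono 2 unfolding H_def by simp
    next
      case 3
      then show ?thesis unfolding H_def Gf_def T_def D1_def by (simp add: phi_def)
    qed
  qed
  have Hbd: "(\<integral>\<^sup>+x. H x \<partial>S) \<le> ennreal (\<integral>x. D1 x \<partial>S)"
    using nn_integral_mono[of S H, OF HE] fatou by (rule order.trans)
  then have "(\<integral>\<^sup>+x. H x \<partial>S) \<noteq> top" by (auto simp: top_unique)
  then have AEH: "AE x in S. H x \<noteq> top" using nn_integral_noteq_infinite[OF Hm] by simp
  then show AE1: "AE x in S. f x = 0 \<longrightarrow> g x = 0"
    by eventually_elim (use g0 in \<open>auto simp: H_def less_le split: if_splits\<close>)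
  have G0: "AE x in S. 0 \<le> Gf x" using AE1
  proof eventually_elim
    case (elim x)
    show ?case
    proof (cases "f x = 0")
      case True then show ?thesis using elim by (simp add: Gf_def T_def D1_def phi_def)
    next
      case False
      then have "0 < f x" using f0[of x] by simp
      then have "phi (g x) \<ge> phi (f x) + (g x - f x) * (1 + ln (f x))" using phi_tangent g0 by auto
      then show ?thesis by (simp add: Gf_def T_def D1_def)
    qed
  qed
  have "(\<integral>\<^sup>+x. ennreal (Gf x) \<partial>S) \<le> (\<integral>\<^sup>+x. H x \<partial>S)"
    by (intro nn_integral_mono) (simp add: H_def)
  then have GH: "(\<integral>\<^sup>+x. ennreal (Gf x) \<partial>S) \<le> ennreal (\<integral>x. D1 x \<partial>S)" using Hbd by simp
  have Gi: "integrable S Gf"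
    using GH G0 by (intro integrableI_nonneg) (auto simp: top_unique less_top[symmetric])
  have "ennreal (\<integral>x. Gf x \<partial>S) = (\<integral>\<^sup>+x. ennreal (Gf x) \<partial>S)"
    using Gi G0 by (intro nn_integral_eq_integral[symmetric])
  then have "ennreal (\<integral>x. Gf x \<partial>S) \<le> ennreal (\<integral>x. D1 x \<partial>S)" using GH by simp
  then have GD: "(\<integral>x. Gf x \<partial>S) \<le> (\<integral>x. D1 x \<partial>S)" using D1int by (simp add: ennreal_le_iff)
  have Teq: "T x = D1 x - Gf x" for x unfolding Gf_def by simp
  have Ti: "integrable S T" unfolding Teq using D1i Gi by auto
  have Tint: "0 \<le> (\<integral>x. T x \<partial>S)" unfolding Teq using D1i Gi GD by simp
  have geq: "g x * ln (f x) = T x + phi (f x) - g x + f x" for x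
    unfolding T_def phi_def by (cases "f x = 0") (auto simp: algebra_simps)
  show gi': "integrable S (\<lambda>x. g x * ln (f x))" unfolding geq using Ti pfi gi fi by auto
  have "(\<integral>x. g x * ln (f x) \<partial>S) = (\<integral>x. T x \<partial>S) + (\<integral>x. phi (f x) \<partial>S) - (\<integral>x. g x \<partial>S) + (\<integral>x. f x \<partial>S)"
    unfolding geq using Ti pfi gi fi by simp
  then show "(\<integral>x. phi (f x) \<partial>S) \<le> (\<integral>x. g x * ln (f x) \<partial>S)" using Tint fg by simp
qed



lemma phi_mix_int:
  fixes f g :: "'a \<Rightarrow> real"
  assumes S: "finite_measure S"
    and fm[measurable]: "f \<in> borel_measurable S" and gm[measurable]: "g \<in> borel_measurable S"
    and f0: "\<And>x. 0 \<le> f x" and g0: "\<And>x. 0 \<le> g x"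
    and pfi: "integrable S (\<lambda>x. phi (f x))" and pgi: "integrable S (\<lambda>x. phi (g x))"
    and a: "0 \<le> a" "a \<le> 1"
  shows "integrable S (\<lambda>x. phi ((1 - a) * f x + a * g x))"
proof -
  interpret finite_measure S by fact
  have maj: "integrable S (\<lambda>x. 1 + \<bar>phi (f x)\<bar> + \<bar>phi (g x)\<bar>)"
    by (intro Bochner_Integration.integrable_add Bochner_Integration.integrable_abs integrable_const pfi pgi)
  have bnd: "AE x in S. norm (phi ((1 - a) * f x + a * g x)) \<le> norm (1 + \<bar>phi (f x)\<bar> + \<bar>phi (g x)\<bar>)"
  proof (intro AE_I2)
    fix x
    have "0 \<le> (1 - a) * f x + a * g x" using a f0 g0 by (intro add_nonneg_nonneg mult_nonneg_nonneg) auto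
    then have lo: "-1 \<le> phi ((1 - a) * f x + a * g x)" using phi_ge1 by auto
    have "phi ((1 - a) * f x + (1 - (1 - a)) * g x) \<le> (1 - a) * phi (f x) + (1 - (1 - a)) * phi (g x)"
      using a f0 g0 by (intro phi_convex) auto
    then have "phi ((1 - a) * f x + a * g x) \<le> (1 - a) * phi (f x) + a * phi (g x)" by simp
    also have "\<dots> \<le> \<bar>phi (f x)\<bar> + \<bar>phi (g x)\<bar>" using a by (intro add_mono cabs) auto
    finally show "norm (phi ((1 - a) * f x + a * g x)) \<le> norm (1 + \<bar>phi (f x)\<bar> + \<bar>phi (g x)\<bar>)"
      using lo by simp
  qed
  show ?thesis by (rule Bochner_Integration.integrable_bound[OF maj _ bnd]) measurable
qed

lemma enn2real_zero_fin: "enn2real r = 0 \<Longrightarrow> r \<noteq> top \<Longrightarrow> r = 0"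
  by (metis enn2real_eq_0_iff)

lemma pyth:
  assumes S: "finite_measure S" and sS: "sets S = sets Q"
    and Cp: "C \<subseteq> {R. prob_on Q R}" and Cc: "convex_meas_set C"
    and proj: "is_I_proj C S P" and VC: "V \<in> C"
    and IV: "I_div V S < \<infinity>"
  shows "absolutely_continuous P V"
    and "integrable V (\<lambda>x. ln (enn2real (RN_deriv P V x)))"
    and "integrable V (\<lambda>x. ln (enn2real (RN_deriv S V x)))"
    and "I_div P S = ereal (\<integral>x. phi (enn2real (RN_deriv S P x)) \<partial>S)"
    and "(\<integral>x. ln (enn2real (RN_deriv P V x)) \<partial>V) + (\<integral>x. phi (enn2real (RN_deriv S P x)) \<partial>S)
           \<le> (\<integral>x. ln (enn2real (RN_deriv S V x)) \<partial>V)"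
proof -
  interpret S: finite_measure S by fact
  have PC: "P \<in> C" and Pmin: "I_div P S = (INF R\<in>C. I_div R S)" and IP: "I_div P S < \<infinity>"
    using proj unfolding is_I_proj_def by auto
  have Pp: "prob_space P" and sP: "sets P = sets S" using PC Cp sS by (auto simp: prob_on_def)
  have Vp: "prob_space V" and sV: "sets V = sets S" using VC Cp sS by (auto simp: prob_on_def)
  interpret P: prob_space P by fact
  interpret V: prob_space V by fact
  have acP: "absolutely_continuous S P" using IP unfolding I_div_def by (auto split: if_splits)
  have acV: "absolutely_continuous S V" using IV unfolding I_div_def by (auto split: if_splits)
  define f where "f x = enn2real (RN_deriv S P x)" for x
  define g where "g x = enn2real (RN_deriv S V x)" for x
  have fm[measurable]: "f \<in> borel_measurable S" unfolding f_def by measurable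
  have gm[measurable]: "g \<in> borel_measurable S" unfolding g_def by measurable
  have f0: "0 \<le> f x" for x unfolding f_def by simp
  have g0: "0 \<le> g x" for x unfolding g_def by simp
  have pfi: "integrable S (\<lambda>x. phi (f x))" unfolding f_def using Sform_int(1)[OF S Pp sP acP] IP by simp
  have pgi: "integrable S (\<lambda>x. phi (g x))" unfolding g_def using Sform_int(1)[OF S Vp sV acV] IV by simp
  show IPeq: "I_div P S = ereal (\<integral>x. phi (enn2real (RN_deriv S P x)) \<partial>S)"
    using Sform_int(2)[OF S Pp sP acP] pfi unfolding f_def by simp
  have IVeq: "I_div V S = ereal (\<integral>x. phi (g x) \<partial>S)"
    using Sform_int(2)[OF S Vp sV acV] pgi unfolding g_def by simp
  have m1: "(\<lambda>x. 1::real) \<in> borel_measurable S" by simp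
  have fi: "integrable S f"
    using S.RN_deriv_integrable[OF P.sigma_finite_measure_axioms acP sP m1] unfolding f_def by simp
  have gi: "integrable S g"
    using S.RN_deriv_integrable[OF V.sigma_finite_measure_axioms acV sV m1] unfolding g_def by simp
  have fint: "(\<integral>x. f x \<partial>S) = 1"
    using S.RN_deriv_integral[OF P.sigma_finite_measure_axioms acP sP m1] unfolding f_def
    by (simp add: P.prob_space)
  have gint: "(\<integral>x. g x \<partial>S) = 1"
    using S.RN_deriv_integral[OF V.sigma_finite_measure_axioms acV sV m1] unfolding g_def
    by (simp add: V.prob_space)
  have finP: "AE x in S. RN_deriv S P x \<noteq> \<infinity>"
    by (rule S.RN_deriv_finite[OF P.sigma_finite_measure_axioms acP sP])
  have finV: "AE x in S. RN_deriv S V x \<noteq> \<infinity>"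
    by (rule S.RN_deriv_finite[OF V.sigma_finite_measure_axioms acV sV])
  have minim: "(\<integral>x. phi (f x) \<partial>S) \<le> (\<integral>x. phi ((1 - a) * f x + a * g x) \<partial>S)"
    if a: "0 < a" "a < 1" for a
  proof -
    define X where "X = mix (1 - a) P V"
    have XC: "X \<in> C" using Cc PC VC a unfolding convex_meas_set_def X_def by auto
    have Xp: "prob_space X" and sX: "sets X = sets S" using XC Cp sS by (auto simp: prob_on_def)
    define w where "w x = ennreal (1 - a) * RN_deriv S P x + ennreal (1 - (1 - a)) * RN_deriv S V x" for x
    have wm[measurable]: "w \<in> borel_measurable S" unfolding w_def by measurable
    have Xd: "X = density S w"
      unfolding X_def w_def by (rule mix_density[OF S.sigma_finite_measure_axioms sP sV acP acV])
    have acX: "absolutely_continuous S X" unfolding Xd by (rule absolutely_continuousI_density[OF wm])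
    have "AE x in S. w x = RN_deriv S X x" using Xd by (intro S.RN_deriv_unique wm) simp
    then have hX: "AE x in S. enn2real (RN_deriv S X x) = (1 - a) * f x + a * g x"
      using finP finV
    proof eventually_elim
      case (elim x)
      have "RN_deriv S P x = ennreal (f x)" using elim unfolding f_def
        by (simp add: ennreal_enn2real_if)
      moreover have "RN_deriv S V x = ennreal (g x)" using elim unfolding g_def
        by (simp add: ennreal_enn2real_if)
      ultimately have wx: "w x = ennreal ((1 - a) * f x + a * g x)" unfolding w_def using a f0 g0
        by (simp add: ennreal_mult ennreal_plus[symmetric])
      have nn: "0 \<le> (1 - a) * f x + a * g x" using a f0[of x] g0[of x] by simp
      have "RN_deriv S X x = ennreal ((1 - a) * f x + a * g x)" using elim(1) wx by simp
      then show ?case using nn by (simp only: enn2real_ennreal)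
    qed
    have pXi: "integrable S (\<lambda>x. phi ((1 - a) * f x + a * g x))"
      using a by (intro phi_mix_int[OF S fm gm f0 g0 pfi pgi]) auto
    have pXi': "integrable S (\<lambda>x. phi (enn2real (RN_deriv S X x)))"
      using pXi by (rule integrable_cong_AE_imp) (use hX in \<open>auto elim!: eventually_mono\<close>)
    have "I_div X S = ereal (\<integral>x. phi (enn2real (RN_deriv S X x)) \<partial>S)"
      using Sform_int(2)[OF S Xp sX acX pXi'] .
    also have "(\<integral>x. phi (enn2real (RN_deriv S X x)) \<partial>S) = (\<integral>x. phi ((1 - a) * f x + a * g x) \<partial>S)"
      using hX by (intro integral_cong_AE) (auto elim!: eventually_mono)
    finally have IX: "I_div X S = ereal (\<integral>x. phi ((1 - a) * f x + a * g x) \<partial>S)" .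
    have "I_div P S \<le> I_div X S" unfolding Pmin using XC by (rule INF_lower)
    then show ?thesis using IX IPeq unfolding f_def by simp
  qed
  have fg: "(\<integral>x. f x \<partial>S) = (\<integral>x. g x \<partial>S)" using fint gint by simp
  have core: "AE x in S. f x = 0 \<longrightarrow> g x = 0"
    "integrable S (\<lambda>x. g x * ln (f x))"
    "(\<integral>x. phi (f x) \<partial>S) \<le> (\<integral>x. g x * ln (f x) \<partial>S)"
    by (rule pyth_core[OF S fm gm f0 g0 fi gi fg pfi pgi]; blast intro: minim)+
  show acPV: "absolutely_continuous P V"
    unfolding absolutely_continuous_def
  proof
    fix N assume N: "N \<in> null_sets P"
    have dP: "density S (RN_deriv S P) = P" by (rule S.density_RN_deriv[OF acP sP])
    have dV: "density S (RN_deriv S V) = V" by (rule S.density_RN_deriv[OF acV sV])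
    have "N \<in> null_sets (density S (RN_deriv S P))" using N dP by simp
    then have N1: "N \<in> sets S" and N2: "AE x in S. x \<in> N \<longrightarrow> RN_deriv S P x = 0"
      by (auto simp: null_sets_density_iff)
    have "AE x in S. x \<in> N \<longrightarrow> RN_deriv S V x = 0"
      using N2 core(1) finV
    proof eventually_elim
      case (elim x)
      show ?case
      proof
        assume "x \<in> N"
        then have "f x = 0" using elim unfolding f_def by simp
        then have "g x = 0" using elim by simp
        then show "RN_deriv S V x = 0" using elim unfolding g_def by (intro enn2real_zero_fin) auto
      qed
    qed
    then have "N \<in> null_sets (density S (RN_deriv S V))" using N1 by (simp add: null_sets_density_iff)
    then show "N \<in> null_sets V" using dV by simp
  qed
  have ratio: "AE x in V. 0 < enn2real (RN_deriv S P x) \<and> 0 < enn2real (RN_deriv S V x) \<and>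
     ln (enn2real (RN_deriv P V x)) = ln (enn2real (RN_deriv S V x)) - ln (enn2real (RN_deriv S P x))"
    by (rule RN_ratio[OF S.sigma_finite_measure_axioms P.finite_measure_axioms V.finite_measure_axioms
          sP sV acP acV acPV])
  have lgi: "integrable V (\<lambda>x. ln (g x))" and lgint: "(\<integral>x. ln (g x) \<partial>V) = (\<integral>x. phi (g x) \<partial>S)"
    using Vform[OF S Vp sV acV] pgi unfolding g_def by auto
  show "integrable V (\<lambda>x. ln (enn2real (RN_deriv S V x)))" using lgi unfolding g_def by simp
  have mu: "(\<lambda>x. ln (g x) - ln (f x)) \<in> borel_measurable S" by measurable
  have gu: "(\<lambda>x. g x * (ln (g x) - ln (f x))) = (\<lambda>x. phi (g x) - g x * ln (f x))"
    by (auto simp: phi_def algebra_simps)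
  have ui: "integrable V (\<lambda>x. ln (g x) - ln (f x))"
    unfolding S.RN_deriv_integrable[OF V.sigma_finite_measure_axioms acV sV mu]
    using pgi core(2) unfolding g_def[symmetric] gu by auto
  have uint: "(\<integral>x. ln (g x) - ln (f x) \<partial>V) = (\<integral>x. phi (g x) \<partial>S) - (\<integral>x. g x * ln (f x) \<partial>S)"
    unfolding S.RN_deriv_integral[OF V.sigma_finite_measure_axioms acV sV mu] g_def[symmetric] gu
    using pgi core(2) by simp
  have ae: "AE x in V. ln (enn2real (RN_deriv P V x)) = ln (g x) - ln (f x)"
    using ratio by eventually_elim (simp add: f_def g_def)
  have "(\<lambda>x. ln (enn2real (RN_deriv P V x))) \<in> borel_measurable P" by measurable
  then have mPV: "(\<lambda>x. ln (enn2real (RN_deriv P V x))) \<in> borel_measurable V"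
    using measurable_cong_sets[of P V borel borel] sP sV by simp
  show "integrable V (\<lambda>x. ln (enn2real (RN_deriv P V x)))"
    using ui mPV by (rule integrable_cong_AE_imp) (use ae in \<open>auto elim!: eventually_mono\<close>)
  have "(\<integral>x. ln (enn2real (RN_deriv P V x)) \<partial>V) = (\<integral>x. ln (g x) - ln (f x) \<partial>V)"
    using ae mPV borel_measurable_integrable[OF ui] by (intro integral_cong_AE) auto
  then show "(\<integral>x. ln (enn2real (RN_deriv P V x)) \<partial>V) + (\<integral>x. phi (enn2real (RN_deriv S P x)) \<partial>S)
           \<le> (\<integral>x. ln (enn2real (RN_deriv S V x)) \<partial>V)"
    using uint core(3) lgint unfolding f_def[symmetric] g_def[symmetric] by simp
qed



lemma ac_trans: "absolutely_continuous A B \<Longrightarrow> absolutely_continuous B C \<Longrightarrow> absolutely_continuous A C"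
  unfolding absolutely_continuous_def by auto

lemma ac_density_pos:
  assumes sV: "sets V = sets Q" and acV: "absolutely_continuous Q V"
    and hm: "h \<in> borel_measurable Q" and pos: "AE x in V. h x \<noteq> 0"
  shows "absolutely_continuous (density Q h) V"
  unfolding absolutely_continuous_def
proof
  fix N assume "N \<in> null_sets (density Q h)"
  then have N: "N \<in> sets Q" and ae: "AE x in Q. x \<in> N \<longrightarrow> h x = 0"
    using null_sets_density_iff[OF hm] by auto
  have "AE x in V. x \<in> N \<longrightarrow> h x = 0" by (rule absolutely_continuous_AE[OF sV acV ae])
  then have "AE x in V. x \<notin> N" using pos by eventually_elim auto
  then show "N \<in> null_sets V" using N sV by (simp add: AE_iff_null_sets)
qed

lemma recur_step:
  assumes Q: "prob_space Q" and V: "prob_space V" and sV: "sets V = sets Q"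
    and acQV: "absolutely_continuous Q V"
    and S': "finite_measure S'" and sS': "sets S' = sets Q" and acQS': "absolutely_continuous Q S'"
    and acS'V: "absolutely_continuous S' V" and iS': "integrable V (\<lambda>x. ln (enn2real (RN_deriv S' V x)))"
    and P': "prob_space P'" and sP': "sets P' = sets Q" and acQP': "absolutely_continuous Q P'"
    and acP'V: "absolutely_continuous P' V" and iP': "integrable V (\<lambda>x. ln (enn2real (RN_deriv P' V x)))"
    and acS'P': "absolutely_continuous S' P'"
    and Pp: "prob_space Pp" and sPp: "sets Pp = sets Q" and acQPp: "absolutely_continuous Q Pp"
    and acPpV: "absolutely_continuous Pp V" and iPp: "integrable V (\<lambda>x. ln (enn2real (RN_deriv Pp V x)))"
    and Sn: "Sn = density Q (\<lambda>x. RN_deriv Q Pp x * inverse (RN_deriv S' P' x))"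
    and Snf: "finite_measure Sn"
  shows "absolutely_continuous Sn V"
    and "integrable V (\<lambda>x. ln (enn2real (RN_deriv Sn V x)))"
    and "(\<integral>x. ln (enn2real (RN_deriv Sn V x)) \<partial>V) + (\<integral>x. ln (enn2real (RN_deriv P' V x)) \<partial>V)
         = (\<integral>x. ln (enn2real (RN_deriv Pp V x)) \<partial>V) + (\<integral>x. ln (enn2real (RN_deriv S' V x)) \<partial>V)"
proof -
  interpret Q: prob_space Q by fact
  interpret V: prob_space V by fact
  interpret S': finite_measure S' by fact
  interpret P': prob_space P' by fact
  interpret Pp: prob_space Pp by fact
  define h where "h x = RN_deriv Q Pp x * inverse (RN_deriv S' P' x)" for x
  have rm[measurable]: "RN_deriv S' P' \<in> borel_measurable Q"
    by (subst measurable_cong_sets[OF sS'[symmetric] refl]) simp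
  have hm[measurable]: "h \<in> borel_measurable Q" unfolding h_def by measurable
  have sSn: "sets Sn = sets Q" unfolding Sn by simp
  have acQSn: "absolutely_continuous Q Sn" unfolding Sn h_def[symmetric]
    by (rule absolutely_continuousI_density[OF hm])
  have sVS': "sets V = sets S'" using sV sS' by simp
  have sVP': "sets V = sets P'" using sV sP' by simp
  have sP'S': "sets P' = sets S'" using sP' sS' by simp
  have Qsf: "sigma_finite_measure Q" by (rule Q.sigma_finite_measure_axioms)
  have b: "AE x in V. 0 < enn2real (RN_deriv Q Pp x) \<and> 0 < enn2real (RN_deriv Q V x) \<and>
     ln (enn2real (RN_deriv Pp V x)) = ln (enn2real (RN_deriv Q V x)) - ln (enn2real (RN_deriv Q Pp x))"
    by (rule RN_ratio[OF Qsf Pp.finite_measure_axioms V.finite_measure_axioms sPp sV acQPp acQV acPpV])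
  have c: "AE x in V. 0 < enn2real (RN_deriv Q P' x) \<and> 0 < enn2real (RN_deriv Q V x) \<and>
     ln (enn2real (RN_deriv P' V x)) = ln (enn2real (RN_deriv Q V x)) - ln (enn2real (RN_deriv Q P' x))"
    by (rule RN_ratio[OF Qsf P'.finite_measure_axioms V.finite_measure_axioms sP' sV acQP' acQV acP'V])
  have d: "AE x in V. 0 < enn2real (RN_deriv Q S' x) \<and> 0 < enn2real (RN_deriv Q V x) \<and>
     ln (enn2real (RN_deriv S' V x)) = ln (enn2real (RN_deriv Q V x)) - ln (enn2real (RN_deriv Q S' x))"
    by (rule RN_ratio[OF Qsf S' V.finite_measure_axioms sS' sV acQS' acQV acS'V])
  have e0: "AE x in P'. 0 < enn2real (RN_deriv Q S' x) \<and> 0 < enn2real (RN_deriv Q P' x) \<and>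
     ln (enn2real (RN_deriv S' P' x)) = ln (enn2real (RN_deriv Q P' x)) - ln (enn2real (RN_deriv Q S' x))"
    by (rule RN_ratio[OF Qsf S' P'.finite_measure_axioms sS' sP' acQS' acQP' acS'P'])
  have e: "AE x in V. 0 < enn2real (RN_deriv Q S' x) \<and> 0 < enn2real (RN_deriv Q P' x) \<and>
     ln (enn2real (RN_deriv S' P' x)) = ln (enn2real (RN_deriv Q P' x)) - ln (enn2real (RN_deriv Q S' x))"
    by (rule absolutely_continuous_AE[OF sVP' acP'V e0])
  have f0: "AE x in P'. RN_deriv S' P' x \<noteq> 0 \<and> RN_deriv S' P' x \<noteq> \<infinity>"
    by (rule RN_AE_pos[OF S'.sigma_finite_measure_axioms P'.sigma_finite_measure_axioms acS'P' sP'S'])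
  have f: "AE x in V. RN_deriv S' P' x \<noteq> 0 \<and> RN_deriv S' P' x \<noteq> \<infinity>"
    by (rule absolutely_continuous_AE[OF sVP' acP'V f0])
  have hpos: "AE x in V. h x \<noteq> 0" using b f
    by eventually_elim (auto simp: h_def)
  show acSnV: "absolutely_continuous Sn V"
    unfolding Sn h_def[symmetric] by (rule ac_density_pos[OF sV acQV hm hpos])
  have "AE x in Q. h x = RN_deriv Q Sn x"
    unfolding Sn h_def[symmetric] by (rule Q.RN_deriv_unique[OF hm refl])
  then have g: "AE x in V. h x = RN_deriv Q Sn x" by (rule absolutely_continuous_AE[OF sV acQV])
  have a: "AE x in V. 0 < enn2real (RN_deriv Q Sn x) \<and> 0 < enn2real (RN_deriv Q V x) \<and>
     ln (enn2real (RN_deriv Sn V x)) = ln (enn2real (RN_deriv Q V x)) - ln (enn2real (RN_deriv Q Sn x))"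
    by (rule RN_ratio[OF Qsf Snf V.finite_measure_axioms sSn sV acQSn acQV acSnV])
  have key: "AE x in V. ln (enn2real (RN_deriv Sn V x)) =
     ln (enn2real (RN_deriv Pp V x)) + ln (enn2real (RN_deriv S' V x)) - ln (enn2real (RN_deriv P' V x))"
    using a b c d e f g
  proof eventually_elim
    case (elim x)
    define q where "q = RN_deriv Q Pp x"
    define r where "r = RN_deriv S' P' x"
    have q0: "0 < enn2real q" using elim unfolding q_def by simp
    have r: "r \<noteq> 0" "r \<noteq> \<infinity>" using elim unfolding r_def by auto
    obtain \<rho> where rho: "r = ennreal \<rho>" "0 < \<rho>" using r
      by (cases r) (auto simp: top_ennreal_def)
    have "enn2real (RN_deriv Q Sn x) = enn2real (h x)" using elim by simp
    also have "\<dots> = enn2real q * inverse \<rho>"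
      unfolding h_def q_def[symmetric] r_def[symmetric] rho(1) using rho(2)
      by (simp add: inverse_ennreal enn2real_mult)
    finally have sn: "enn2real (RN_deriv Q Sn x) = enn2real q / \<rho>" by (simp add: divide_inverse)
    have lnr: "ln \<rho> = ln (enn2real (RN_deriv Q P' x)) - ln (enn2real (RN_deriv Q S' x))"
      using elim unfolding r_def[symmetric] rho(1) using rho(2) by simp
    have "ln (enn2real (RN_deriv Q Sn x)) = ln (enn2real q) - ln \<rho>"
      unfolding sn using q0 rho(2) by (simp add: ln_div)
    then show ?case using elim lnr unfolding q_def by simp
  qed
  have mSn: "(\<lambda>x. ln (enn2real (RN_deriv Sn V x))) \<in> borel_measurable V"
    using measurable_cong_sets[of Sn V borel borel] sSn sV by simp
  have isum: "integrable V (\<lambda>x. ln (enn2real (RN_deriv Pp V x)) + ln (enn2real (RN_deriv S' V x)) - ln (enn2real (RN_deriv P' V x)))"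
    using iPp iS' iP' by auto
  show iSn: "integrable V (\<lambda>x. ln (enn2real (RN_deriv Sn V x)))"
    using isum mSn by (rule integrable_cong_AE_imp) (use key in \<open>auto elim!: eventually_mono\<close>)
  have "(\<integral>x. ln (enn2real (RN_deriv Sn V x)) \<partial>V) =
     (\<integral>x. ln (enn2real (RN_deriv Pp V x)) + ln (enn2real (RN_deriv S' V x)) - ln (enn2real (RN_deriv P' V x)) \<partial>V)"
    using key mSn borel_measurable_integrable[OF isum] by (intro integral_cong_AE) auto
  also have "\<dots> = (\<integral>x. ln (enn2real (RN_deriv Pp V x)) \<partial>V) + (\<integral>x. ln (enn2real (RN_deriv S' V x)) \<partial>V)
      - (\<integral>x. ln (enn2real (RN_deriv P' V x)) \<partial>V)"
    using iPp iS' iP' by simp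
  finally show "(\<integral>x. ln (enn2real (RN_deriv Sn V x)) \<partial>V) + (\<integral>x. ln (enn2real (RN_deriv P' V x)) \<partial>V)
         = (\<integral>x. ln (enn2real (RN_deriv Pp V x)) \<partial>V) + (\<integral>x. ln (enn2real (RN_deriv S' V x)) \<partial>V)"
    by simp
qed



lemma Ivfin:
  assumes X: "finite_measure X" and V: "prob_space V" and sV: "sets V = sets X"
    and ac: "absolutely_continuous X V"
  shows "I_div V X < \<infinity> \<longleftrightarrow> integrable V (\<lambda>x. ln (enn2real (RN_deriv X V x)))"
  using Sform_int(1)[OF X V sV ac] Vform(1)[OF X V sV ac] Vform'[OF X V sV ac] by blast

lemma iv_lower:
  assumes X: "finite_measure X" and V: "prob_space V" and sV: "sets V = sets X"
    and ac: "absolutely_continuous X V"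
    and i: "integrable V (\<lambda>x. ln (enn2real (RN_deriv X V x)))"
  shows "(\<integral>x. ln (enn2real (RN_deriv X V x)) \<partial>V) \<ge> - measure X (space X)"
proof -
  have pi: "integrable X (\<lambda>x. phi (enn2real (RN_deriv X V x)))" by (rule Vform'[OF X V sV ac i])
  have "ereal (- measure X (space X)) \<le> I_div V X" by (rule Sform_int(3)[OF X V sV ac])
  also have "\<dots> = ereal (\<integral>x. phi (enn2real (RN_deriv X V x)) \<partial>X)" by (rule Sform_int(2)[OF X V sV ac pi])
  also have "(\<integral>x. phi (enn2real (RN_deriv X V x)) \<partial>X) = (\<integral>x. ln (enn2real (RN_deriv X V x)) \<partial>V)"
    using Vform(2)[OF X V sV ac pi] by simp
  finally show ?thesis by simp
qed

lemma telesc: fixes m :: nat shows "(\<Sum>i=1..m. (a (i - 1) - a i)) = a 0 - (a m :: real)"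
  by (induction m) auto



theorem lemma3p5:
  fixes Q :: "'a measure" and t :: nat and C :: "nat \<Rightarrow> 'a measure set"
    and S P :: "nat \<Rightarrow> nat \<Rightarrow> 'a measure"
  assumes Q: "prob_space Q"
    and t: "t \<ge> 1"
    and C_prob: "\<And>i. i \<in> {1..t} \<Longrightarrow> C i \<subseteq> {R. prob_on Q R}"
    and C_convex: "\<And>i. i \<in> {1..t} \<Longrightarrow> convex_meas_set (C i)"
    and C_closed: "\<And>i. i \<in> {1..t} \<Longrightarrow> variation_closed Q (C i)"
    and V: "\<exists>V. (\<forall>i\<in>{1..t}. V \<in> C i) \<and> I_div V Q < \<infinity>"
    and S0: "\<And>i. S 0 i = Q" and P0: "\<And>i. P 0 i = Q"
    and S1: "\<And>n. n \<ge> 1 \<Longrightarrow> S n 1 = density Q (\<lambda>x.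
               RN_deriv Q (P (n - 1) t) x * inverse (RN_deriv (S (n - 1) 1) (P (n - 1) 1) x))"
    and Si: "\<And>n i. n \<ge> 1 \<Longrightarrow> i \<in> {2..t} \<Longrightarrow> S n i = density Q (\<lambda>x.
               RN_deriv Q (P n (i - 1)) x * inverse (RN_deriv (S (n - 1) i) (P (n - 1) i) x))"
    and Pproj: "\<And>n i. n \<ge> 1 \<Longrightarrow> i \<in> {1..t} \<Longrightarrow> is_I_proj (C i) (S n i) (P n i)"
    and A: "\<exists>B::ennreal. B < \<infinity> \<and>
              (\<forall>n\<ge>1. \<forall>i\<in>{1..t}. emeasure (S n i) (space (S n i)) \<le> B)"
  shows "\<exists>B::real. \<forall>n\<ge>1. \<forall>i\<in>{1..t}. I_div (P n i) (S n i) \<le> ereal B"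
proof -
  interpret Q: prob_space Q by fact
  obtain V where VC0: "\<forall>i\<in>{1..t}. V \<in> C i" and IVQ: "I_div V Q < \<infinity>" using V by blast
  have VC: "\<And>i. i \<in> {1..t} \<Longrightarrow> V \<in> C i" using VC0 by blast
  obtain B :: ennreal where Bfin: "B < \<infinity>"
    and Bb: "\<And>n i. n \<ge> 1 \<Longrightarrow> i \<in> {1..t} \<Longrightarrow> emeasure (S n i) (space (S n i)) \<le> B"
    using A by auto
  have t1: "1 \<in> {1..t}" "t \<in> {1..t}" using t by auto
  have Vp: "prob_space V" and sV: "sets V = sets Q"
    using VC[OF t1(1)] C_prob[OF t1(1)] by (auto simp: prob_on_def)
  interpret V: prob_space V by fact
  have acQV: "absolutely_continuous Q V" using IVQ unfolding I_div_def by (auto split: if_splits)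
  define LV where "LV X = (\<lambda>x. ln (enn2real (RN_deriv X V x)))" for X
  define iv where "iv X = (\<integral>x. LV X x \<partial>V)" for X
  have iQ: "integrable V (LV Q)" unfolding LV_def
    using Ivfin[OF Q.finite_measure_axioms Vp sV acQV] IVQ by simp
  define Bm where "Bm = max 1 (enn2real B)"
  have Bm0: "0 \<le> Bm" unfolding Bm_def by simp
  define Pprev where "Pprev n i = (if i = 1 then P (n - 1) t else P n (i - 1))" for n i
  have Sdens: "S n i = density Q (\<lambda>x. RN_deriv Q (Pprev n i) x * inverse (RN_deriv (S (n - 1) i) (P (n - 1) i) x))"
    if "n \<ge> 1" "i \<in> {1..t}" for n i
  proof (cases "i = 1")
    case True then show ?thesis using S1[OF that(1)] by (simp add: Pprev_def)
  next
    case False then have "i \<in> {2..t}" using that by auto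
    then show ?thesis using Si[OF that(1)] False by (simp add: Pprev_def)
  qed
  have bS: "\<forall>i\<in>{1..t}. finite_measure (S n i) \<and> sets (S n i) = sets Q \<and> absolutely_continuous Q (S n i)
      \<and> measure (S n i) (space (S n i)) \<le> Bm" for n
  proof (induction n)
    case 0 then show ?case using S0 Q.finite_measure_axioms
      by (simp add: absolutely_continuous_def Q.prob_space Bm_def)
  next
    case (Suc n)
    show ?case
    proof
      fix i assume i: "i \<in> {1..t}"
      have n: "Suc n \<ge> 1" by simp
      have e: "emeasure (S (Suc n) i) (space (S (Suc n) i)) \<le> B" by (rule Bb[OF n i])
      then have fin: "emeasure (S (Suc n) i) (space (S (Suc n) i)) \<noteq> \<infinity>"
        using Bfin by (metis infinity_ennreal_def leD top_greatest top.not_eq_extremum order.strict_trans1)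
      have "measure (S (Suc n) i) (space (S (Suc n) i)) \<le> enn2real B"
        unfolding measure_def using e Bfin by (intro enn2real_mono) auto
      then have m: "measure (S (Suc n) i) (space (S (Suc n) i)) \<le> Bm" unfolding Bm_def by simp
      have f: "finite_measure (S (Suc n) i)" using fin by (intro finite_measureI)
      have sPrev: "sets (S n i) = sets Q" using Suc i by auto
      have r1[measurable]: "RN_deriv (S n i) (P n i) \<in> borel_measurable Q"
        by (subst measurable_cong_sets[OF sPrev[symmetric] refl]) simp
      have hm: "(\<lambda>x. RN_deriv Q (Pprev (Suc n) i) x * inverse (RN_deriv (S n i) (P n i) x)) \<in> borel_measurable Q"
        by measurable
      have "sets (S (Suc n) i) = sets Q" using Sdens[OF n i] by simp
      moreover have "absolutely_continuous Q (S (Suc n) i)"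
        using Sdens[OF n i] absolutely_continuousI_density[OF hm] by simp
      ultimately show "finite_measure (S (Suc n) i) \<and> sets (S (Suc n) i) = sets Q \<and>
          absolutely_continuous Q (S (Suc n) i) \<and> measure (S (Suc n) i) (space (S (Suc n) i)) \<le> Bm"
        using f m by simp
    qed
  qed
  have bP: "prob_space (P n i) \<and> sets (P n i) = sets Q \<and> absolutely_continuous Q (P n i)
      \<and> absolutely_continuous (S n i) (P n i)" if i: "i \<in> {1..t}" for n i
  proof (cases "n = 0")
    case True then show ?thesis using S0 P0 Q by (simp add: absolutely_continuous_def)
  next
    case False then have n: "n \<ge> 1" by simp
    have pr: "is_I_proj (C i) (S n i) (P n i)" by (rule Pproj[OF n i])
    then have "P n i \<in> C i" and fin: "I_div (P n i) (S n i) < \<infinity>" unfolding is_I_proj_def by auto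
    then have pp: "prob_space (P n i)" "sets (P n i) = sets Q" using C_prob[OF i] by (auto simp: prob_on_def)
    have ac: "absolutely_continuous (S n i) (P n i)" using fin unfolding I_div_def by (auto split: if_splits)
    then have "absolutely_continuous Q (P n i)" using bS i by (blast intro: ac_trans)
    then show ?thesis using pp ac by simp
  qed
  define W where "W n i \<longleftrightarrow> absolutely_continuous (S n i) V \<and> absolutely_continuous (P n i) V \<and>
      integrable V (LV (S n i)) \<and> integrable V (LV (P n i))" for n i
  define J where "J n i = (\<integral>x. phi (enn2real (RN_deriv (S n i) (P n i) x)) \<partial>(S n i))" for n i
  have step: "W n i \<and> iv (S n i) + iv (P (n - 1) i) = iv (Pprev n i) + iv (S (n - 1) i) \<and>
       iv (P n i) + J n i \<le> iv (S n i) \<and> I_div (P n i) (S n i) = ereal (J n i)"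
    if n: "n \<ge> 1" and i: "i \<in> {1..t}" and Wp: "W (n - 1) i"
      and acPp: "absolutely_continuous (Pprev n i) V" and iPp: "integrable V (LV (Pprev n i))" for n i
  proof -
    have bPp: "prob_space (Pprev n i) \<and> sets (Pprev n i) = sets Q \<and> absolutely_continuous Q (Pprev n i)"
    proof (cases "i = 1")
      case True then show ?thesis using bP[OF t1(2)] by (simp add: Pprev_def)
    next
      case False then have "i - 1 \<in> {1..t}" using i by auto
      then show ?thesis using bP False by (simp add: Pprev_def)
    qed
    have bS': "finite_measure (S (n - 1) i) \<and> sets (S (n - 1) i) = sets Q \<and> absolutely_continuous Q (S (n - 1) i)"
      using bS i by blast
    have bP': "prob_space (P (n - 1) i) \<and> sets (P (n - 1) i) = sets Q \<and> absolutely_continuous Q (P (n - 1) i)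
      \<and> absolutely_continuous (S (n - 1) i) (P (n - 1) i)" using bP[OF i] by blast
    have bSn: "finite_measure (S n i) \<and> sets (S n i) = sets Q" using bS i by blast
    note rs = recur_step[OF Q Vp sV acQV bS'[THEN conjunct1] bS'[THEN conjunct2, THEN conjunct1]
        bS'[THEN conjunct2, THEN conjunct2] Wp[unfolded W_def LV_def, THEN conjunct1]
        Wp[unfolded W_def LV_def, THEN conjunct2, THEN conjunct2, THEN conjunct1]
        bP'[THEN conjunct1] bP'[THEN conjunct2, THEN conjunct1] bP'[THEN conjunct2, THEN conjunct2, THEN conjunct1]
        Wp[unfolded W_def LV_def, THEN conjunct2, THEN conjunct1]
        Wp[unfolded W_def LV_def, THEN conjunct2, THEN conjunct2, THEN conjunct2]
        bP'[THEN conjunct2, THEN conjunct2, THEN conjunct2]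
        bPp[THEN conjunct1] bPp[THEN conjunct2, THEN conjunct1] bPp[THEN conjunct2, THEN conjunct2]
        acPp iPp[unfolded LV_def] Sdens[OF n i] bSn[THEN conjunct1]]
    have IV: "I_div V (S n i) < \<infinity>"
      using Ivfin[OF bSn[THEN conjunct1] Vp _ rs(1)] rs(2) bSn sV by simp
    note py = pyth[OF bSn[THEN conjunct1] bSn[THEN conjunct2] C_prob[OF i] C_convex[OF i] Pproj[OF n i] VC[OF i] IV]
    have "W n i" unfolding W_def LV_def using rs(1,2) py(1,2) by simp
    moreover have "iv (S n i) + iv (P (n - 1) i) = iv (Pprev n i) + iv (S (n - 1) i)"
      unfolding iv_def LV_def using rs(3) .
    moreover have "iv (P n i) + J n i \<le> iv (S n i)" unfolding iv_def LV_def J_def using py(5) .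
    moreover have "I_div (P n i) (S n i) = ereal (J n i)" unfolding J_def using py(4) .
    ultimately show ?thesis by blast
  qed
  have Wall: "\<forall>i\<in>{1..t}. W n i" for n
  proof (induction n)
    case 0 then show ?case using S0 P0 acQV iQ by (simp add: W_def)
  next
    case (Suc n)
    note outer = Suc.IH
    have "\<forall>i. 1 \<le> i \<longrightarrow> i \<le> t \<longrightarrow> W (Suc n) i"
    proof
      fix i show "1 \<le> i \<longrightarrow> i \<le> t \<longrightarrow> W (Suc n) i"
      proof (induction i)
        case 0 then show ?case by simp
      next
        case (Suc j)
        show ?case
        proof (intro impI)
          assume j: "1 \<le> Suc j" "Suc j \<le> t"
          have i: "Suc j \<in> {1..t}" using j by simp
          have Wp: "W (Suc n - 1) (Suc j)" using outer i by simp
          have Wpp: "absolutely_continuous (Pprev (Suc n) (Suc j)) V \<and> integrable V (LV (Pprev (Suc n) (Suc j)))"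
          proof (cases "j = 0")
            case True then show ?thesis using outer t1(2) by (simp add: Pprev_def W_def)
          next
            case False then have "W (Suc n) j" using Suc.IH j by simp
            then show ?thesis using False by (simp add: Pprev_def W_def)
          qed
          show "W (Suc n) (Suc j)" using step[OF _ i Wp] Wpp by simp
        qed
      qed
    qed
    then show ?case by auto
  qed
  have facts: "iv (S n i) + iv (P (n - 1) i) = iv (Pprev n i) + iv (S (n - 1) i) \<and>
       iv (P n i) + J n i \<le> iv (S n i) \<and> I_div (P n i) (S n i) = ereal (J n i)"
    if n: "n \<ge> 1" and i: "i \<in> {1..t}" for n i
  proof -
    have Wp: "W (n - 1) i" using Wall i by blast
    have "W (n - 1) t" using Wall t1(2) by blast
    moreover have "i \<noteq> 1 \<Longrightarrow> W n (i - 1)"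
    proof -
      assume "i \<noteq> 1" then have "i - 1 \<in> {1..t}" using i by auto
      then show "W n (i - 1)" using Wall by blast
    qed
    ultimately
    have Wpp: "absolutely_continuous (Pprev n i) V \<and> integrable V (LV (Pprev n i))"
      by (cases "i = 1") (auto simp: Pprev_def W_def)
    show ?thesis using step[OF n i Wp] Wpp by blast
  qed
  define D where "D n i = iv (S n i) - iv (P n i)" for n i
  have inv: "(\<Sum>i=1..t. D n i) + iv (P n t) = iv Q" for n
  proof (induction n)
    case 0 then show ?case by (simp add: D_def S0 P0)
  next
    case (Suc n)
    define a where "a k = (if k = 0 then iv (P n t) else iv (P (Suc n) k))" for k
    have Dst: "D (Suc n) i = (a (i - 1) - a i) + D n i" if i: "i \<in> {1..t}" for i
    proof -
      have e: "iv (S (Suc n) i) + iv (P n i) = iv (Pprev (Suc n) i) + iv (S n i)"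
        using facts[of "Suc n" i] i by simp
      have "iv (Pprev (Suc n) i) = a (i - 1)" using i by (auto simp: a_def Pprev_def)
      moreover have "iv (P (Suc n) i) = a i" using i by (auto simp: a_def)
      ultimately show ?thesis using e unfolding D_def by simp
    qed
    have "(\<Sum>i=1..t. D (Suc n) i) = (\<Sum>i=1..t. (a (i - 1) - a i) + D n i)"
      using Dst by (intro sum.cong) auto
    also have "\<dots> = (\<Sum>i=1..t. (a (i - 1) - a i)) + (\<Sum>i=1..t. D n i)" by (rule sum.distrib)
    also have "(\<Sum>i=1..t. (a (i - 1) - a i)) = a 0 - a t" by (rule telesc)
    also have "a 0 - a t = iv (P n t) - iv (P (Suc n) t)" using t by (simp add: a_def)
    finally show ?case using Suc.IH by simp
  qed
  define K where "K = iv Q + 1 + real t * Bm"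
  have bound: "I_div (P n i) (S n i) \<le> ereal K" if n: "n \<ge> 1" and i: "i \<in> {1..t}" for n i
  proof -
    have Jlow: "J n j \<ge> - Bm" if j: "j \<in> {1..t}" for j
    proof -
      have bSj: "finite_measure (S n j)" "sets (S n j) = sets Q" "measure (S n j) (space (S n j)) \<le> Bm"
        using bS j by auto
      have bPj: "prob_space (P n j)" "sets (P n j) = sets Q" "absolutely_continuous (S n j) (P n j)"
        using bP[OF j] by auto
      have "ereal (- measure (S n j) (space (S n j))) \<le> I_div (P n j) (S n j)"
        using bSj bPj by (intro Sform_int(3)) auto
      then have "- measure (S n j) (space (S n j)) \<le> J n j" using facts[OF n j] by simp
      then show ?thesis using bSj(3) by simp
    qed
    have Dlow: "D n j \<ge> - Bm" if j: "j \<in> {1..t}" for j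
      using Jlow[OF j] facts[OF n j] unfolding D_def by simp
    have Plow: "iv (P n t) \<ge> -1"
    proof -
      have bPt: "prob_space (P n t)" "sets (P n t) = sets Q" using bP[OF t1(2)] by auto
      interpret Pt: prob_space "P n t" by fact
      have W: "absolutely_continuous (P n t) V" "integrable V (LV (P n t))" using Wall t1(2) by (auto simp: W_def)
      have "iv (P n t) \<ge> - measure (P n t) (space (P n t))" unfolding iv_def LV_def
        using W bPt sV by (intro iv_lower Pt.finite_measure_axioms Vp) (auto simp: LV_def)
      then show ?thesis by (simp add: Pt.prob_space)
    qed
    have fin: "finite ({1..t} - {i})" by simp
    have "(\<Sum>j=1..t. D n j) = D n i + (\<Sum>j\<in>{1..t} - {i}. D n j)"
      using i by (simp add: sum.remove)
    moreover have "(\<Sum>j\<in>{1..t} - {i}. D n j) \<ge> (\<Sum>j\<in>{1..t} - {i}. - Bm)"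
      using Dlow by (intro sum_mono) auto
    moreover have "(\<Sum>j\<in>{1..t} - {i}. - Bm) \<ge> - (real t * Bm)"
    proof -
      have "card ({1..t} - {i}) \<le> t" by (metis card_Diff1_le card_atLeastAtMost diff_Suc_1 finite_atLeastAtMost le_trans)
      then have "real (card ({1..t} - {i})) * Bm \<le> real t * Bm" using Bm0 by (intro mult_right_mono) auto
      then show ?thesis by simp
    qed
    ultimately have "D n i \<le> iv Q + 1 + real t * Bm" using inv[of n] Plow by linarith
    then have "J n i \<le> K" using facts[OF n i] unfolding D_def K_def by linarith
    then show ?thesis using facts[OF n i] by simp
  qed
  show ?thesis using bound by blast
qed

end
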